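(* Let $X,Y$ be finite sets with $Y\ne\emptyset$, and let $A\in\mathbb{Z}^{X\times Y}$ be an integer matrix with no all-zero columns. Then there exist a partition $Y=\bigcup_{i=1}^kS_i$ into nonempty sets, rows $x_1,\dots,x_k\in X$ and nonzero integers $b_1,\dots,b_k\in\mathbb{Z}\setminus\{0\}$ such that (i) for every $1\le i\le k$, $A(x_i,y)=b_i$ for all $y\in S_i$; and (ii) for every $\delta>0$, every $x\in X$ and every $b\in\mathbb{Z}\setminus\{0\}$, the number of indices $1\le i\le k$ with $$\Pr_{y\in S_i}\bigl[A(x,y)=b\bigr]\ge\delta$$ (with $y$ uniform in $S_i$) is at most $(\log|Y|+1)/\delta$, where $\log$ is the natural logarithm. *)

theory Defs
  imports "HOL-Analysis.Analysis"
begin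

end

theory Submission
  imports Defs
begin

lemma card_shift:
  "card {i\<in>{1..Suc k}. Q i} = (if Q 1 then 1 else 0) + card {j\<in>{1..k}. Q (Suc j)}"
proof -
  have e: "{i\<in>{1..Suc k}. Q i} = (if Q 1 then {1} else {}) \<union> Suc ` {j\<in>{1..k}. Q (Suc j)}"
  proof (intro set_eqI iffI)
    fix i assume "i \<in> {i\<in>{1..Suc k}. Q i}"
    then show "i \<in> (if Q 1 then {1} else {}) \<union> Suc ` {j\<in>{1..k}. Q (Suc j)}"
      by (cases "i = 1") (auto simp: image_iff intro!: exI[of _ "i - 1"])
  qed (auto split: if_splits)
  have c: "card (Suc ` {j\<in>{1..k}. Q (Suc j)}) = card {j\<in>{1..k}. Q (Suc j)}"
    by (simp add: card_image)
  show ?thesis unfolding e using c by (auto simp: card_insert_if)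
qed

lemma num_step:
  fixes t t' m s :: nat and d :: real
  assumes "d > 0" "t = m + t'" "t \<le> s" "m \<le> s" "d \<le> real m / real s"
    and "n' = 0 \<or> (t' > 0 \<and> real n' \<le> (ln t' + 1) / d)"
  shows "t > 0 \<and> real (1 + n') \<le> (ln t + 1) / d"
proof -
  have sp: "s > 0" using assms by (metis div_by_0 not_gr0 not_le of_nat_0)
  have md: "real m \<ge> d * s" using assms sp by (simp add: field_simps)
  have mp: "m > 0" using md sp assms(1)
    by (metis gr0I mult_pos_pos of_nat_0 of_nat_0_less_iff not_le)
  have tp: "t > 0" using mp assms by simp
  have d1: "d \<le> 1" using md assms(4) sp
    by (metis mult_le_cancel_right2 of_nat_0_less_iff of_nat_mono order.trans)
  have lt: "ln t \<ge> 0" using tp by simp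
  show ?thesis
  proof (cases "n' = 0")
    case True
    have "d \<le> 1 + ln t" using d1 lt by linarith
    then show ?thesis using True tp assms(1) by (simp add: field_simps)
  next
    case False
    with assms(6) have t'p: "t' > 0" and nb: "real n' \<le> (ln t' + 1) / d" by auto
    have tt: "real t = real m + real t'" using assms(2) by simp
    have "d * real t \<le> d * real s" using assms(1,3) by (intro mult_left_mono) auto
    then have "real t' \<le> real t - d * real t" using tt md by linarith
    then have "real t' \<le> (1 - d) * t" by (simp add: algebra_simps)
    also have "\<dots> \<le> exp (-d) * t" using exp_ge_add_one_self[of "-d"] by (intro mult_right_mono) auto
    finally have "ln t' \<le> ln (exp (-d) * t)" using t'p by (subst ln_le_cancel_iff) auto
    also have "\<dots> = ln t - d" using tp by (simp add: ln_mult)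
    finally have "ln t' \<le> ln t - d" .
    then have "(ln t' + 1) / d \<le> (ln t - d + 1) / d" using assms(1) by (intro divide_right_mono) auto
    also have "\<dots> = (ln t + 1) / d - 1" using assms(1) by (simp add: field_simps)
    finally show ?thesis using nb tp by simp
  qed
qed

definition good :: "'a set \<Rightarrow> ('a \<Rightarrow> 'b \<Rightarrow> int) \<Rightarrow> 'b set \<Rightarrow> nat \<Rightarrow> (nat \<Rightarrow> 'b set) \<Rightarrow> (nat \<Rightarrow> 'a) \<Rightarrow> (nat \<Rightarrow> int) \<Rightarrow> bool" where
 "good X A R k S xr b \<longleftrightarrow>
           (\<Union>i\<in>{1..k}. S i) = R
         \<and> (\<forall>i\<in>{1..k}. S i \<noteq> {})
         \<and> (\<forall>i\<in>{1..k}. \<forall>j\<in>{1..k}. i \<noteq> j \<longrightarrow> S i \<inter> S j = {})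
         \<and> (\<forall>i\<in>{1..k}. xr i \<in> X \<and> b i \<noteq> 0)
         \<and> (\<forall>i\<in>{1..k}. \<forall>y\<in>S i. A (xr i) y = b i)
         \<and> (\<forall>(\<delta>::real) > 0. \<forall>x\<in>X. \<forall>c::int. c \<noteq> 0 \<longrightarrow>
              card {i\<in>{1..k}. real (card {y\<in>S i. A x y = c}) / real (card (S i)) \<ge> \<delta>} = 0
            \<or> (card {y\<in>R. A x y = c} > 0 \<and>
              real (card {i\<in>{1..k}. real (card {y\<in>S i. A x y = c}) / real (card (S i)) \<ge> \<delta>})
                \<le> (ln (real (card {y\<in>R. A x y = c})) + 1) / \<delta>))"

lemma main:
  fixes X :: "'a set" and A :: "'a \<Rightarrow> 'b \<Rightarrow> int"
  assumes X: "finite X"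
  shows "finite R \<Longrightarrow> (\<forall>y\<in>R. \<exists>x\<in>X. A x y \<noteq> 0) \<Longrightarrow> \<exists>k S xr b. good X A R k S xr b"
proof (induction R rule: finite_psubset_induct)
  case (psubset R)
  show ?case
  proof (cases "R = {}")
    case True
    then show ?thesis unfolding good_def by (intro exI[of _ 0]) auto
  next
    case False
    define f where "f = (\<lambda>(x, c). card {y\<in>R. A x y = c})"
    define P where "P = (\<lambda>(x, y). (x, A x y)) ` ((X \<times> R) \<inter> {(x, y). A x y \<noteq> 0})"
    have Pfin: "finite P" unfolding P_def using X psubset(1) by auto
    have Pne: "P \<noteq> {}" unfolding P_def using False psubset(3) by auto
    obtain p where pP: "p \<in> P" and pmax: "f p = Max (f ` P)"
    proof -
      have "Max (f ` P) \<in> f ` P" using Pfin Pne by (intro Max_in) auto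
      then show ?thesis using that by (metis imageE)
    qed
    obtain x0 c0 where p: "p = (x0, c0)" by (cases p)
    obtain y0 where x0: "x0 \<in> X" and c0: "c0 \<noteq> 0" and y0: "y0 \<in> R" "A x0 y0 = c0"
      using pP unfolding p P_def by auto
    define S1 where "S1 = {y\<in>R. A x0 y = c0}"
    have S1ne: "S1 \<noteq> {}" using y0 unfolding S1_def by auto
    have S1R: "S1 \<subseteq> R" unfolding S1_def by auto
    have maxp: "card {y\<in>R. A x y = c} \<le> card S1" if "x \<in> X" "c \<noteq> 0" for x c
    proof (cases "{y\<in>R. A x y = c} = {}")
      case False
      then obtain y where "y \<in> R" "A x y = c" by auto
      then have "(x, c) \<in> P" unfolding P_def using that by (auto intro!: image_eqI[of _ _ "(x,y)"])
      then have "f (x, c) \<le> f p" unfolding pmax using Pfin by auto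
      then show ?thesis unfolding f_def p S1_def by simp
    next
      case True then show ?thesis by (metis card.empty zero_le)
    qed
    define R' where "R' = R - S1"
    have R'R: "R' \<subset> R" unfolding R'_def using S1ne S1R by auto
    obtain k' S' xr' b' where g: "good X A R' k' S' xr' b'"
      using psubset(2)[OF R'R] psubset(3) R'R by blast
    note gg = g[unfolded good_def]
    note g1 = conjunct1[OF gg]
    note g2 = conjunct1[OF conjunct2[OF gg]]
    note g3 = conjunct1[OF conjunct2[OF conjunct2[OF gg]]]
    note g4 = conjunct1[OF conjunct2[OF conjunct2[OF conjunct2[OF gg]]]]
    note g5 = conjunct1[OF conjunct2[OF conjunct2[OF conjunct2[OF conjunct2[OF gg]]]]]
    note g6 = conjunct2[OF conjunct2[OF conjunct2[OF conjunct2[OF conjunct2[OF gg]]]]]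
    define S where "S = (\<lambda>i. if i = 1 then S1 else S' (i - 1))"
    define xr where "xr = (\<lambda>i. if i = 1 then x0 else xr' (i - 1))"
    define b where "b = (\<lambda>i. if i = 1 then c0 else b' (i - 1))"
    have ivl: "{1..Suc k'} = insert 1 (Suc ` {1..k'})"
      by (auto simp: image_iff intro!: exI[of _ "x - 1" for x])
    have S'R': "S' j \<subseteq> R'" if "j \<in> {1..k'}" for j using g1 that by blast
    have "good X A R (Suc k') S xr b"
      unfolding good_def
    proof (intro conjI)
      show "(\<Union>i\<in>{1..Suc k'}. S i) = R"
      proof -
        have "(\<Union>i\<in>{1..Suc k'}. S i) = S1 \<union> (\<Union>j\<in>{1..k'}. S' j)"
          unfolding ivl UN_insert image_image S_def by simp
        then show ?thesis using g1 S1R unfolding R'_def by auto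
      qed
      show "\<forall>i\<in>{1..Suc k'}. S i \<noteq> {}"
        using g2 S1ne unfolding ivl S_def by (auto simp del: image_Suc_atLeastAtMost)
      show "\<forall>i\<in>{1..Suc k'}. xr i \<in> X \<and> b i \<noteq> 0"
        using g4 x0 c0 unfolding ivl xr_def b_def by (auto simp del: image_Suc_atLeastAtMost)
      show "\<forall>i\<in>{1..Suc k'}. \<forall>y\<in>S i. A (xr i) y = b i"
        using g5 unfolding ivl xr_def b_def S_def S1_def by (auto simp del: image_Suc_atLeastAtMost)
      show "\<forall>i\<in>{1..Suc k'}. \<forall>j\<in>{1..Suc k'}. i \<noteq> j \<longrightarrow> S i \<inter> S j = {}"
      proof (intro ballI impI)
        fix i j assume ij: "i \<in> {1..Suc k'}" "j \<in> {1..Suc k'}" "i \<noteq> j"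
        show "S i \<inter> S j = {}"
        proof (cases "i = 1 \<or> j = 1")
          case True
          have sh: "S l \<subseteq> R - S1" if "l \<in> {1..Suc k'}" "l \<noteq> 1" for l
          proof -
            have "l - 1 \<in> {1..k'}" using that by auto
            then show ?thesis using S'R'[of "l - 1"] that unfolding S_def R'_def by simp
          qed
          have S1': "S 1 = S1" unfolding S_def by simp
          show ?thesis using True sh[of i] sh[of j] ij S1' by auto
        next
          case False
          then have "i - 1 \<in> {1..k'}" "j - 1 \<in> {1..k'}" "i - 1 \<noteq> j - 1" using ij by auto
          then have "S' (i - 1) \<inter> S' (j - 1) = {}" using g3 by blast
          then show ?thesis using False unfolding S_def by simp
        qed
      qed
      show "\<forall>(\<delta>::real) > 0. \<forall>x\<in>X. \<forall>c::int. c \<noteq> 0 \<longrightarrow>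
              card {i\<in>{1..Suc k'}. real (card {y\<in>S i. A x y = c}) / real (card (S i)) \<ge> \<delta>} = 0
            \<or> (card {y\<in>R. A x y = c} > 0 \<and>
              real (card {i\<in>{1..Suc k'}. real (card {y\<in>S i. A x y = c}) / real (card (S i)) \<ge> \<delta>})
                \<le> (ln (real (card {y\<in>R. A x y = c})) + 1) / \<delta>)"
      proof (intro allI impI ballI)
        fix d :: real and x and c :: int assume d: "d > 0" and x: "x \<in> X" and c: "c \<noteq> 0"
        define n' where "n' = card {j\<in>{1..k'}. real (card {y\<in>S' j. A x y = c}) / real (card (S' j)) \<ge> d}"
        have ih: "n' = 0 \<or> (card {y\<in>R'. A x y = c} > 0 \<and> real n' \<le> (ln (card {y\<in>R'. A x y = c}) + 1) / d)"
          using g6 d x c unfolding n'_def by blast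
        have cs: "card {i\<in>{1..Suc k'}. real (card {y\<in>S i. A x y = c}) / real (card (S i)) \<ge> d}
           = (if d \<le> real (card {y\<in>S1. A x y = c}) / real (card S1) then 1 else 0) + n'"
          unfolding card_shift n'_def S_def by (simp add: Suc_le_eq cong: conj_cong)
        have Rfin: "finite R" by fact
        have split: "{y\<in>R. A x y = c} = {y\<in>S1. A x y = c} \<union> {y\<in>R'. A x y = c}"
          unfolding R'_def using S1R by auto
        have tsum: "card {y\<in>R. A x y = c} = card {y\<in>S1. A x y = c} + card {y\<in>R'. A x y = c}"
          unfolding split using Rfin S1R by (intro card_Un_disjoint) (auto simp: R'_def intro: finite_subset)
        have tle: "card {y\<in>R. A x y = c} \<le> card S1" using maxp x c .
        have mle: "card {y\<in>S1. A x y = c} \<le> card S1" using Rfin S1R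
          by (intro card_mono) (auto intro: finite_subset)
        have t'le: "card {y\<in>R'. A x y = c} \<le> card {y\<in>R. A x y = c}" using tsum by simp
        show "card {i\<in>{1..Suc k'}. real (card {y\<in>S i. A x y = c}) / real (card (S i)) \<ge> d} = 0
            \<or> (card {y\<in>R. A x y = c} > 0 \<and>
              real (card {i\<in>{1..Suc k'}. real (card {y\<in>S i. A x y = c}) / real (card (S i)) \<ge> d})
                \<le> (ln (real (card {y\<in>R. A x y = c})) + 1) / d)"
        proof (cases "d \<le> real (card {y\<in>S1. A x y = c}) / real (card S1)")
          case True
          from num_step[OF d tsum tle mle True ih] show ?thesis unfolding cs using True by simp
        next
          case False
          show ?thesis
          proof (cases "n' = 0")
            case True then show ?thesis unfolding cs using False by simp
          next
            case n0: False
            with ih have t'p: "card {y\<in>R'. A x y = c} > 0"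
              and nb: "real n' \<le> (ln (card {y\<in>R'. A x y = c}) + 1) / d" by auto
            have "ln (card {y\<in>R'. A x y = c}) \<le> ln (card {y\<in>R. A x y = c})"
              using t'p t'le by simp
            then have "(ln (card {y\<in>R'. A x y = c}) + 1) / d \<le> (ln (card {y\<in>R. A x y = c}) + 1) / d"
              using d by (intro divide_right_mono) auto
            then show ?thesis unfolding cs using False nb t'p t'le by simp
          qed
        qed
      qed
    qed
    then show ?thesis by blast
  qed
qed

theorem lemma4p3:
  fixes X :: "'a set" and Y :: "'b set" and A :: "'a \<Rightarrow> 'b \<Rightarrow> int"
  assumes "finite X" and "finite Y" and "Y \<noteq> {}"
    and "\<forall>y\<in>Y. \<exists>x\<in>X. A x y \<noteq> 0"
  shows "\<exists>(k::nat) (S :: nat \<Rightarrow> 'b set) (xr :: nat \<Rightarrow> 'a) (b :: nat \<Rightarrow> int).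
           (\<Union>i\<in>{1..k}. S i) = Y
         \<and> (\<forall>i\<in>{1..k}. S i \<noteq> {})
         \<and> (\<forall>i\<in>{1..k}. \<forall>j\<in>{1..k}. i \<noteq> j \<longrightarrow> S i \<inter> S j = {})
         \<and> (\<forall>i\<in>{1..k}. xr i \<in> X \<and> b i \<noteq> 0)
         \<and> (\<forall>i\<in>{1..k}. \<forall>y\<in>S i. A (xr i) y = b i)
         \<and> (\<forall>(\<delta>::real) > 0. \<forall>x\<in>X. \<forall>c::int. c \<noteq> 0 \<longrightarrow>
              real (card {i\<in>{1..k}. real (card {y\<in>S i. A x y = c}) / real (card (S i)) \<ge> \<delta>})
                \<le> (ln (real (card Y)) + 1) / \<delta>)"
proof -
  obtain k S xr b where g: "good X A Y k S xr b" using main[OF assms(1,2,4)] by blast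
  note gg = g[unfolded good_def]
  note g6 = conjunct2[OF conjunct2[OF conjunct2[OF conjunct2[OF conjunct2[OF gg]]]]]
  have lnY: "ln (real (card Y)) \<ge> 0" using assms(2,3) by (simp add: Suc_leI card_gt_0_iff)
  have "\<forall>(\<delta>::real) > 0. \<forall>x\<in>X. \<forall>c::int. c \<noteq> 0 \<longrightarrow>
              real (card {i\<in>{1..k}. real (card {y\<in>S i. A x y = c}) / real (card (S i)) \<ge> \<delta>})
                \<le> (ln (real (card Y)) + 1) / \<delta>"
  proof (intro allI impI ballI)
    fix d :: real and x and c :: int assume d: "d > 0" and x: "x \<in> X" and c: "c \<noteq> 0"
    define n where "n = card {i\<in>{1..k}. real (card {y\<in>S i. A x y = c}) / real (card (S i)) \<ge> d}"
    have h: "n = 0 \<or> (card {y\<in>Y. A x y = c} > 0 \<and> real n \<le> (ln (card {y\<in>Y. A x y = c}) + 1) / d)"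
      using g6 d x c unfolding n_def by blast
    have le: "card {y\<in>Y. A x y = c} \<le> card Y" using assms(2) by (intro card_mono) auto
    show "real n \<le> (ln (real (card Y)) + 1) / d"
    proof (cases "n = 0")
      case True then show ?thesis using lnY d by simp
    next
      case False
      with h have p: "card {y\<in>Y. A x y = c} > 0" and nb: "real n \<le> (ln (card {y\<in>Y. A x y = c}) + 1) / d" by auto
      have "ln (card {y\<in>Y. A x y = c}) \<le> ln (card Y)" using p le by simp
      then have "(ln (card {y\<in>Y. A x y = c}) + 1) / d \<le> (ln (card Y) + 1) / d"
        using d by (intro divide_right_mono) auto
      then show ?thesis using nb by simp
    qed
  qed
  then show ?thesis using gg by (intro exI[of _ k] exI[of _ S] exI[of _ xr] exI[of _ b]) simp
qed

end
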